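(* Let $V$ be a finite set of variables, let $D_{\mathit{ds}}$ be the causal ABA framework defined in the context, let $S$ be a complete extension of $D_{\mathit{ds}}$ and let $G(S)=(V,\{(u,v)\mid\mathit{arr}_{uv}\in S\})$. For all distinct $x,y\in V$ and all $\mathbf Z\subseteq V\setminus\{x,y\}$: if $(x\perp\!\!\!\perp y\mid\mathbf Z)\in S$ then $x$ and $y$ are d-separated given $\mathbf Z$ in $G(S)$.
   Context: ABA. An ABA framework is $D=(\mathcal L,\mathcal R,\mathcal A,\overline{\cdot})$ with sentences $\mathcal L$, rules $a_0\leftarrow a_1,\dots,a_n$ ($n\ge0$), assumptions $\mathcal A\subseteq\mathcal L$ and contrary function $\overline{\cdot}:\mathcal A\to\mathcal L$. $S\vdash q$ ($S\subseteq\mathcal A$) if there is a finite rooted labelled tree with root $q$, set of leaf labels $S$ or $S\cup\{\top\}$, and every inner node labelled by the head of a rule whose children are labelled by the distinct body elements (one child $\top$ for an empty body). $S$ attacks $T$ if some $S'\subseteq S$ derives $\overline a$ for some $a\in T$. Conflict-free: does not attack itself; $S$ defends $T$ if it attacks every attacker of $T$; admissible: conflict-free and self-defending; complete: admissible and contains every assumption set it defends. Graphs. A path is a sequence of distinct nodes with consecutive nodes adjacent; an inner node $x_i$ of $x_1\dots x_n$ is a collider if $(x_{i-1},x_i)$ and $(x_{i+1},x_i)$ are edges; descendants are nodes reachable by directed paths. For $\mathbf Z\subseteq V\setminus\{x,y\}$, an $x$-$y$-path is $\mathbf Z$-active if every collider on it is in $\mathbf Z$ or has a descendant in $\mathbf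 Z$ and every other node on it is not in $\mathbf Z$; $x,y$ are d-separated given $\mathbf Z$ if no $\mathbf Z$-active $x$-$y$-path exists. An $x$-$y$-collider-tree of a DAG $H$ is a subgraph $t$ of $H$ with an $x$-$y$-path $p_t$ in $t$ such that every node of $t$ not on $p_t$ is a descendant of a collider of $p_t$; it is $\mathbf Z$-active if $p_t$ is $\mathbf Z$-active in $(V,\text{edges of }t)$. The framework $D_{\mathit{ds}}$. Assumptions: $\mathit{arr}_{xy}$ for all ordered pairs of distinct $x,y\in V$; one $\mathit{noe}_{xy}=\mathit{noe}_{yx}$ per unordered pair; independence assumptions $(x\perp\!\!\!\perp y\mid\mathbf Z)$ for $\mathbf Z\subseteq V$, distinct $x,y\in V\setminus\mathbf Z$ (symmetric in $x,y$). Each assumption $a$ has its own distinct fresh contrary $\overline a$. Rules: (i) $\overline a\leftarrow b$ for distinct $a,b\in\{\mathit{arr}_{xy},\mathit{arr}_{yx},\mathit{noe}_{xy}\}$; (ii) for every sequence $x_1\dots x_k$ with consecutive elements distinct and $x_1=x_k$ and every $1\le i<k$: $\overline{\mathit{arr}_{x_ix_{i+1}}}\leftarrow\mathit{arr}_{x_1x_2},\dots,\mathit{arr}_{x_{k-1}x_k}$; (iii) $\mathit{dpath}_{xy}\leftarrow\mathit{arr}_{xy}$; $\mathit{dpath}_{xz}\leftarrow\mathit{dpath}_{xy},\mathit{arr}_{yz}$; $e_{xy}\leftarrow\mathit{arr}_{xy}$; $e_{xy}\leftarrow\mathit{arr}_{yx}$; $\overline{\mathit{noe}_{xy}}\leftarrow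 e_{xy}$; (iv) for all distinct $x,y$, $\mathbf Z\subseteq V\setminus\{x,y\}$ and every $\mathbf Z$-active $x$-$y$-collider-tree $t$ (of any DAG on $V$), $\overline{(x\perp\!\!\!\perp y\mid\mathbf Z)}\leftarrow\{\mathit{arr}_{uv}\mid(u,v)\text{ an edge of }t\}$. *)

theory Defs
  imports Main
begin

text \<open>An ABA framework is given by a set of rules R (pairs of head and body; the body
  of a rule a0 <- a1,...,an is the set of its body elements, since the children of a node
  are labelled by the distinct body elements), a set of assumptions A and a contrary
  function ctr.  Sentences are the elements of the type.\<close>

text \<open>derives R A S q: there is a finite derivation tree for q whose set of assumption
  leaves is exactly S (leaves labelled by top, coming from empty bodies, are not recorded).\<close>

inductive derives :: "('s \<times> 's set) set \<Rightarrow> 's set \<Rightarrow> 's set \<Rightarrow> 's \<Rightarrow> bool"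
  for R :: "('s \<times> 's set) set" and A :: "'s set" where
  asm:  "a \<in> A \<Longrightarrow> derives R A {a} a"
| rule: "(h, B) \<in> R \<Longrightarrow> finite B \<Longrightarrow> (\<forall>b\<in>B. derives R A (f b) b)
         \<Longrightarrow> derives R A (\<Union>b\<in>B. f b) h"

definition attacks :: "('s \<times> 's set) set \<Rightarrow> 's set \<Rightarrow> ('s \<Rightarrow> 's) \<Rightarrow> 's set \<Rightarrow> 's set \<Rightarrow> bool" where
  "attacks R A ctr S T \<longleftrightarrow> (\<exists>a\<in>T. \<exists>S'\<subseteq>S. derives R A S' (ctr a))"

definition conflict_free :: "('s \<times> 's set) set \<Rightarrow> 's set \<Rightarrow> ('s \<Rightarrow> 's) \<Rightarrow> 's set \<Rightarrow> bool" where
  "conflict_free R A ctr S \<longleftrightarrow> \<not> attacks R A ctr S S"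

definition defends :: "('s \<times> 's set) set \<Rightarrow> 's set \<Rightarrow> ('s \<Rightarrow> 's) \<Rightarrow> 's set \<Rightarrow> 's set \<Rightarrow> bool" where
  "defends R A ctr S T \<longleftrightarrow> (\<forall>U\<subseteq>A. attacks R A ctr U T \<longrightarrow> attacks R A ctr S U)"

definition admissible :: "('s \<times> 's set) set \<Rightarrow> 's set \<Rightarrow> ('s \<Rightarrow> 's) \<Rightarrow> 's set \<Rightarrow> bool" where
  "admissible R A ctr S \<longleftrightarrow> S \<subseteq> A \<and> conflict_free R A ctr S \<and> defends R A ctr S S"

definition complete :: "('s \<times> 's set) set \<Rightarrow> 's set \<Rightarrow> ('s \<Rightarrow> 's) \<Rightarrow> 's set \<Rightarrow> bool" where
  "complete R A ctr S \<longleftrightarrow> admissible R A ctr S \<and>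
     (\<forall>T\<subseteq>A. defends R A ctr S T \<longrightarrow> T \<subseteq> S)"

definition adjacent :: "('v \<times> 'v) set \<Rightarrow> 'v \<Rightarrow> 'v \<Rightarrow> bool" where
  "adjacent E a b \<longleftrightarrow> (a, b) \<in> E \<or> (b, a) \<in> E"

definition is_path :: "'v set \<Rightarrow> ('v \<times> 'v) set \<Rightarrow> 'v list \<Rightarrow> bool" where
  "is_path Vs E p \<longleftrightarrow> p \<noteq> [] \<and> set p \<subseteq> Vs \<and> distinct p \<and>
     (\<forall>i. Suc i < length p \<longrightarrow> adjacent E (p ! i) (p ! Suc i))"

definition is_xy_path :: "'v set \<Rightarrow> ('v \<times> 'v) set \<Rightarrow> 'v \<Rightarrow> 'v \<Rightarrow> 'v list \<Rightarrow> bool" where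
  "is_xy_path Vs E x y p \<longleftrightarrow> is_path Vs E p \<and> hd p = x \<and> last p = y"

definition collider :: "('v \<times> 'v) set \<Rightarrow> 'v list \<Rightarrow> nat \<Rightarrow> bool" where
  "collider E p i \<longleftrightarrow> 0 < i \<and> Suc i < length p \<and>
     (p ! (i - 1), p ! i) \<in> E \<and> (p ! Suc i, p ! i) \<in> E"

definition descendant :: "('v \<times> 'v) set \<Rightarrow> 'v \<Rightarrow> 'v \<Rightarrow> bool" where
  "descendant E v w \<longleftrightarrow> (v, w) \<in> E\<^sup>*"

definition active :: "('v \<times> 'v) set \<Rightarrow> 'v set \<Rightarrow> 'v list \<Rightarrow> bool" where
  "active E Z p \<longleftrightarrow> (\<forall>i < length p.
     (collider E p i \<longrightarrow> (p ! i \<in> Z \<or> (\<exists>w\<in>Z. descendant E (p ! i) w))) \<and>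
     (\<not> collider E p i \<longrightarrow> p ! i \<notin> Z))"

definition d_separated :: "'v set \<Rightarrow> ('v \<times> 'v) set \<Rightarrow> 'v set \<Rightarrow> 'v \<Rightarrow> 'v \<Rightarrow> bool" where
  "d_separated Vs E Z x y \<longleftrightarrow> \<not> (\<exists>p. is_xy_path Vs E x y p \<and> active E Z p)"

definition is_dag :: "'v set \<Rightarrow> ('v \<times> 'v) set \<Rightarrow> bool" where
  "is_dag Vs H \<longleftrightarrow> H \<subseteq> Vs \<times> Vs \<and> acyclic H"

text \<open>An x-y-collider-tree of the DAG H, represented by its edge set Et together with its
  distinguished x-y-path p (its nodes are the nodes of p and the endpoints of edges in Et):
  every node of t not on p is a descendant (in t) of a collider of p.\<close>
definition collider_tree :: "'v set \<Rightarrow> ('v \<times> 'v) set \<Rightarrow> 'v \<Rightarrow> 'v \<Rightarrow> ('v \<times> 'v) set \<Rightarrow> 'v list \<Rightarrow> bool" where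
  "collider_tree Vs H x y Et p \<longleftrightarrow> Et \<subseteq> H \<and> is_xy_path Vs Et x y p \<and>
     (\<forall>(u, v) \<in> Et. \<forall>w \<in> {u, v}. w \<notin> set p \<longrightarrow>
        (\<exists>i. collider Et p i \<and> descendant Et (p ! i) w))"

definition active_collider_tree :: "'v set \<Rightarrow> ('v \<times> 'v) set \<Rightarrow> 'v set \<Rightarrow> 'v \<Rightarrow> 'v \<Rightarrow> ('v \<times> 'v) set \<Rightarrow> bool" where
  "active_collider_tree Vs H Z x y Et \<longleftrightarrow> (\<exists>p. collider_tree Vs H x y Et p \<and> active Et Z p)"

text \<open>Sentences.  Noe and independence assumptions are indexed by the unordered pair {x,y},
  so that noe_xy = noe_yx and (x indep y | Z) = (y indep x | Z).  Ctr a is the (fresh,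
  distinct) contrary of a.\<close>
datatype 'v sent =
    Arr 'v 'v
  | Noe "'v set"
  | Indep "'v set" "'v set"
  | Dpath 'v 'v
  | Edge 'v 'v
  | Ctr "'v sent"

definition ds_asms :: "'v set \<Rightarrow> 'v sent set" where
  "ds_asms V =
     {Arr x y | x y. x \<in> V \<and> y \<in> V \<and> x \<noteq> y} \<union>
     {Noe {x, y} | x y. x \<in> V \<and> y \<in> V \<and> x \<noteq> y} \<union>
     {Indep {x, y} Z | x y Z. Z \<subseteq> V \<and> x \<in> V - Z \<and> y \<in> V - Z \<and> x \<noteq> y}"

definition ds_rules :: "'v set \<Rightarrow> ('v sent \<times> 'v sent set) set" where
  "ds_rules V =
     \<comment> \<open>(i)\<close>
     {(Ctr a, {b}) | a b x y. x \<in> V \<and> y \<in> V \<and> x \<noteq> y \<and>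
        a \<in> {Arr x y, Arr y x, Noe {x, y}} \<and> b \<in> {Arr x y, Arr y x, Noe {x, y}} \<and> a \<noteq> b} \<union>
     \<comment> \<open>(ii) cycles x_1 ... x_k with x_1 = x_k (list indices 0 .. k-1)\<close>
     {(Ctr (Arr (xs ! i) (xs ! Suc i)), {Arr (xs ! j) (xs ! Suc j) | j. Suc j < length xs})
        | xs i. set xs \<subseteq> V \<and> 2 \<le> length xs \<and> hd xs = last xs \<and>
          (\<forall>j. Suc j < length xs \<longrightarrow> xs ! j \<noteq> xs ! Suc j) \<and> Suc i < length xs} \<union>
     \<comment> \<open>(iii)\<close>
     {(Dpath x y, {Arr x y}) | x y. x \<in> V \<and> y \<in> V} \<union>
     {(Dpath x z, {Dpath x y, Arr y z}) | x y z. x \<in> V \<and> y \<in> V \<and> z \<in> V} \<union>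
     {(Edge x y, {Arr x y}) | x y. x \<in> V \<and> y \<in> V} \<union>
     {(Edge x y, {Arr y x}) | x y. x \<in> V \<and> y \<in> V} \<union>
     {(Ctr (Noe {x, y}), {Edge x y}) | x y. x \<in> V \<and> y \<in> V \<and> x \<noteq> y} \<union>
     \<comment> \<open>(iv)\<close>
     {(Ctr (Indep {x, y} Z), {Arr u v | u v. (u, v) \<in> Et})
        | x y Z Et. x \<in> V \<and> y \<in> V \<and> x \<noteq> y \<and> Z \<subseteq> V - {x, y} \<and>
          (\<exists>H. is_dag V H \<and> active_collider_tree V H Z x y Et)}"

text \<open>The graph G(S) = (V, {(u,v) | arr_uv in S}); its node set is V.\<close>
definition graph_of :: "'v sent set \<Rightarrow> ('v \<times> 'v) set" where
  "graph_of S = {(u, v). Arr u v \<in> S}"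

end

theory Submission
  imports Defs
begin

lemma arr_asm:
  assumes "Arr u v \<in> ds_asms V"
  shows "u \<in> V \<and> v \<in> V \<and> u \<noteq> v"
  using assms unfolding ds_asms_def by auto

lemma trancl_list:
  assumes "(a, b) \<in> E\<^sup>+"
  shows "\<exists>xs. 2 \<le> length xs \<and> hd xs = a \<and> last xs = b \<and>
           (\<forall>j. Suc j < length xs \<longrightarrow> (xs ! j, xs ! Suc j) \<in> E)"
  using assms
proof (induction rule: converse_trancl_induct)
  case (base y)
  have "\<forall>j. Suc j < length [y, b] \<longrightarrow> ([y, b] ! j, [y, b] ! Suc j) \<in> E"
    using base by (auto simp: less_Suc_eq)
  then show ?case by (intro exI[of _ "[y, b]"]) auto
next
  case (step y z)
  then obtain xs where xs: "2 \<le> length xs" "hd xs = z" "last xs = b"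
    "\<forall>j. Suc j < length xs \<longrightarrow> (xs ! j, xs ! Suc j) \<in> E" by blast
  have "\<forall>j. Suc j < length (y # xs) \<longrightarrow> ((y # xs) ! j, (y # xs) ! Suc j) \<in> E"
  proof (intro allI impI)
    fix j assume j: "Suc j < length (y # xs)"
    show "((y # xs) ! j, (y # xs) ! Suc j) \<in> E"
    proof (cases j)
      case 0
      then show ?thesis using step(1) xs(1,2) by (cases xs) auto
    next
      case (Suc k)
      then show ?thesis using xs(4) j by auto
    qed
  qed
  moreover have "last (y # xs) = b" using xs by auto
  ultimately show ?case using xs(1) by (intro exI[of _ "y # xs"]) auto
qed

lemma self_attack:
  assumes "complete R A Ctr S" "a \<in> S" "S' \<subseteq> S" "derives R A S' (Ctr a)"
  shows False
  using assms unfolding complete_def admissible_def conflict_free_def attacks_def by blast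

lemma derive_body:
  assumes "(h, B) \<in> R" "finite B" "B \<subseteq> A"
  shows "derives R A B h"
proof -
  have "derives R A (\<Union>b\<in>B. {b}) h"
    by (rule derives.rule[OF assms(1,2)]) (use assms(3) in \<open>auto intro: derives.asm\<close>)
  then show ?thesis by simp
qed

lemma acyclic_graph:
  assumes fin: "finite V" and c: "complete (ds_rules V) (ds_asms V) Ctr S"
  shows "acyclic (graph_of S)"
proof (rule acyclicI, rule allI, rule notI)
  fix a assume "(a, a) \<in> (graph_of S)\<^sup>+"
  from trancl_list[OF this] obtain xs where xs: "2 \<le> length xs" "hd xs = a" "last xs = a"
    "\<forall>j. Suc j < length xs \<longrightarrow> (xs ! j, xs ! Suc j) \<in> graph_of S"
    by blast
  have SA: "S \<subseteq> ds_asms V" using c by (simp add: complete_def admissible_def)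
  have arr: "\<And>j. Suc j < length xs \<Longrightarrow> Arr (xs ! j) (xs ! Suc j) \<in> S"
    using xs(4) by (simp add: graph_of_def)
  have prp: "\<And>j. Suc j < length xs \<Longrightarrow> xs ! j \<in> V \<and> xs ! Suc j \<in> V \<and> xs ! j \<noteq> xs ! Suc j"
    by (rule arr_asm[OF subsetD[OF SA arr]])
  have setV: "set xs \<subseteq> V"
  proof
    fix v assume "v \<in> set xs"
    then obtain k where k: "k < length xs" "xs ! k = v" by (auto simp: in_set_conv_nth)
    show "v \<in> V"
    proof (cases k)
      case 0 then show ?thesis using prp[of 0] k xs(1) by auto
    next
      case (Suc m) then show ?thesis using prp[of m] k by auto
    qed
  qed
  define B where "B = {Arr (xs ! j) (xs ! Suc j) | j. Suc j < length xs}"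
  have rule: "(Ctr (Arr (xs ! 0) (xs ! Suc 0)), B) \<in> ds_rules V"
    unfolding ds_rules_def B_def
    apply (rule UnI1, rule UnI1, rule UnI1, rule UnI1, rule UnI1, rule UnI1)
    apply (rule UnI2)
    apply (rule CollectI)
    apply (rule exI[of _ xs], rule exI[of _ 0])
    using setV xs(1,2,3) prp by auto
  have finB: "finite B" unfolding B_def setcompr_eq_image
    by (rule finite_imageI, rule finite_subset[of _ "{..<length xs}"]) auto
  have BS: "B \<subseteq> S" unfolding B_def using arr by auto
  have "derives (ds_rules V) (ds_asms V) B (Ctr (Arr (xs ! 0) (xs ! Suc 0)))"
    using derive_body[OF rule finB] BS SA by blast
  then show False using self_attack[OF c arr[of 0] BS] xs(1) by auto
qed

lemma chain_lemma:
  assumes "(c, a) \<in> E\<^sup>*" "(a, w) \<in> E\<^sup>*"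
    and "\<And>u v. (u, v) \<in> E \<Longrightarrow> (c, u) \<in> E\<^sup>* \<Longrightarrow> (v, w) \<in> E\<^sup>* \<Longrightarrow> (u, v) \<in> D"
  shows "(c, a) \<in> D\<^sup>*"
  using assms(1,2)
proof (induction rule: rtrancl_induct)
  case base
  then show ?case by simp
next
  case (step u v)
  have "(u, w) \<in> E\<^sup>*" using step(2,4) by (meson converse_rtrancl_into_rtrancl)
  then have "(c, u) \<in> D\<^sup>*" using step(3) by blast
  moreover have "(u, v) \<in> D" using assms(3)[OF step(2,1,4)] .
  ultimately show ?case by (rule rtrancl_into_rtrancl)
qed

theorem proposition3:
  fixes V :: "'v set" and S :: "'v sent set" and x y :: 'v and Z :: "'v set"
  assumes "finite V"
    and "complete (ds_rules V) (ds_asms V) Ctr S"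
    and "x \<in> V" and "y \<in> V" and "x \<noteq> y" and "Z \<subseteq> V - {x, y}"
    and "Indep {x, y} Z \<in> S"
  shows "d_separated V (graph_of S) Z x y"
proof (rule ccontr)
  assume "\<not> d_separated V (graph_of S) Z x y"
  then obtain p where pp: "is_xy_path V (graph_of S) x y p" and pa: "active (graph_of S) Z p"
    unfolding d_separated_def by blast
  define E where "E = graph_of S"
  have c: "complete (ds_rules V) (ds_asms V) Ctr S" by fact
  have SA: "S \<subseteq> ds_asms V" using c by (simp add: complete_def admissible_def)
  have EV: "E \<subseteq> V \<times> V"
  proof
    fix e assume "e \<in> E"
    then obtain u v where e: "e = (u, v)" "Arr u v \<in> S" unfolding E_def graph_of_def by blast
    then show "e \<in> V \<times> V" using arr_asm[OF subsetD[OF SA e(2)]] by simp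
  qed
  have dag: "is_dag V E" unfolding is_dag_def E_def
    using EV acyclic_graph[OF assms(1) c] unfolding E_def by blast
  define D where "D = {(a, b). (a, b) \<in> E \<and> (\<exists>i w. collider E p i \<and> w \<in> Z \<and>
                          (p ! i, a) \<in> E\<^sup>* \<and> (b, w) \<in> E\<^sup>*)}"
  define Et where "Et = (E \<inter> (set p \<times> set p)) \<union> D"
  have EtE: "Et \<subseteq> E" unfolding Et_def D_def by blast
  have DEt: "D \<subseteq> Et" unfolding Et_def by blast
  have chain: "(p ! i, a) \<in> Et\<^sup>*"
    if "collider E p i" "w \<in> Z" "(p ! i, a) \<in> E\<^sup>*" "(a, w) \<in> E\<^sup>*" for i w a
  proof -
    have "(p ! i, a) \<in> D\<^sup>*"
    proof (rule chain_lemma[OF that(3,4)])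
      fix u v assume "(u, v) \<in> E" "(p ! i, u) \<in> E\<^sup>*" "(v, w) \<in> E\<^sup>*"
      then show "(u, v) \<in> D" unfolding D_def using that(1,2) by blast
    qed
    then show ?thesis using rtrancl_mono[OF DEt] by blast
  qed
  have coll: "collider Et p i \<longleftrightarrow> collider E p i" for i
  proof
    assume "collider Et p i" then show "collider E p i"
      using EtE unfolding collider_def by blast
  next
    assume h: "collider E p i"
    then have "i - 1 < length p" "i < length p" "Suc i < length p" unfolding collider_def by auto
    then have "p ! (i - 1) \<in> set p" "p ! i \<in> set p" "p ! Suc i \<in> set p" by simp_all
    then show "collider Et p i" using h unfolding collider_def Et_def by blast
  qed
  have path: "is_xy_path V Et x y p"
  proof -
    have "adjacent Et (p ! i) (p ! Suc i)" if "Suc i < length p" for i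
    proof -
      have "p ! i \<in> set p" "p ! Suc i \<in> set p" using that by simp_all
      moreover have "adjacent E (p ! i) (p ! Suc i)" using pp that
        unfolding is_xy_path_def is_path_def E_def by blast
      ultimately show ?thesis unfolding adjacent_def Et_def by blast
    qed
    then show ?thesis using pp unfolding is_xy_path_def is_path_def by blast
  qed
  have desc: "\<exists>w\<in>Z. (p ! i, w) \<in> E\<^sup>*" if "collider E p i" "i < length p" for i
  proof -
    have "p ! i \<in> Z \<or> (\<exists>w\<in>Z. descendant E (p ! i) w)"
      using pa that unfolding active_def E_def by blast
    then show ?thesis unfolding descendant_def by blast
  qed
  have act: "active Et Z p"
    unfolding active_def
  proof (rule allI, rule impI, rule conjI)
    fix i assume i: "i < length p"
    show "collider Et p i \<longrightarrow> p ! i \<in> Z \<or> (\<exists>w\<in>Z. descendant Et (p ! i) w)"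
    proof
      assume "collider Et p i"
      then have ce: "collider E p i" using coll by blast
      then obtain w where w: "w \<in> Z" "(p ! i, w) \<in> E\<^sup>*" using desc i by blast
      have "(p ! i, w) \<in> Et\<^sup>*" using chain[OF ce w(1) w(2) rtrancl_refl] .
      then show "p ! i \<in> Z \<or> (\<exists>w\<in>Z. descendant Et (p ! i) w)"
        using w(1) unfolding descendant_def by blast
    qed
    show "\<not> collider Et p i \<longrightarrow> p ! i \<notin> Z"
      using pa i coll unfolding active_def E_def by blast
  qed
  have ctree: "collider_tree V E x y Et p"
    unfolding collider_tree_def
  proof (intro conjI)
    show "Et \<subseteq> E" by fact
    show "is_xy_path V Et x y p" by fact
    show "\<forall>(u, v)\<in>Et. \<forall>w\<in>{u, v}. w \<notin> set p \<longrightarrow> (\<exists>i. collider Et p i \<and> descendant Et (p ! i) w)"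
    proof (intro ballI impI, clarify)
      fix u v w assume uv: "(u, v) \<in> Et" and w: "w \<in> {u, v}" "w \<notin> set p"
      then have "(u, v) \<in> D" unfolding Et_def by blast
      then obtain i z where iz: "(u, v) \<in> E" "collider E p i" "z \<in> Z"
          "(p ! i, u) \<in> E\<^sup>*" "(v, z) \<in> E\<^sup>*"
        unfolding D_def by blast
      have pv: "(p ! i, v) \<in> E\<^sup>*" using iz(4,1) by (rule rtrancl_into_rtrancl)
      have uz: "(u, z) \<in> E\<^sup>*" using iz(1,5) by (rule converse_rtrancl_into_rtrancl)
      have "(p ! i, u) \<in> Et\<^sup>*" using chain[OF iz(2,3,4) uz] .
      moreover have "(p ! i, v) \<in> Et\<^sup>*" using chain[OF iz(2,3) pv iz(5)] .
      ultimately have "descendant Et (p ! i) w" using w(1) unfolding descendant_def by blast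
      then show "\<exists>i. collider Et p i \<and> descendant Et (p ! i) w"
        using coll iz(2) by blast
    qed
  qed
  define B where "B = {Arr u v | u v. (u, v) \<in> Et}"
  have rule: "(Ctr (Indep {x, y} Z), B) \<in> ds_rules V"
  proof -
    have "\<exists>H. is_dag V H \<and> active_collider_tree V H Z x y Et"
      using dag ctree act unfolding active_collider_tree_def by blast
    then have "(Ctr (Indep {x, y} Z), B) \<in>
     {(Ctr (Indep {x, y} Z), {Arr u v | u v. (u, v) \<in> Et})
        | x y Z Et. x \<in> V \<and> y \<in> V \<and> x \<noteq> y \<and> Z \<subseteq> V - {x, y} \<and>
          (\<exists>H. is_dag V H \<and> active_collider_tree V H Z x y Et)}"
      unfolding B_def using assms(3,4,5,6) by blast
    then show ?thesis unfolding ds_rules_def by (rule UnI2)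
  qed
  have finEt: "finite Et" using EtE EV assms(1) by (meson finite_SigmaI finite_subset)
  have BI: "B = (\<lambda>(u, v). Arr u v) ` Et" unfolding B_def by auto
  have finB: "finite B" unfolding BI using finEt by simp
  have BS: "B \<subseteq> S" unfolding B_def using EtE unfolding E_def graph_of_def by blast
  have "derives (ds_rules V) (ds_asms V) B (Ctr (Indep {x, y} Z))"
    using derive_body[OF rule finB] BS SA by blast
  then show False using self_attack[OF c assms(7) BS] by blast
qed

end
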